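(* (1) Fix $\xi\in[0,0.13]$. Then both $\eta_\xi(y)$ and $\beta(y)$ are strictly decreasing in $y\in[\cos(2\pi/9),1)$. Consequently, if $y_i=\cos(2\pi/n_i)$ with integers $n_i\ge9$ for $i\in\{2,3,5,6\}$, then $\eta_\xi(y_i)\in[0,0.13]$ and $\beta(y_i)\in[1,2]$ for all $i\in\{2,3,5,6\}$. (2) Fix $y\in(0,1)$. Then $\eta_\xi(y)$ is strictly increasing in $\xi\in[0,\infty)$.
   Context: For $\xi\ge0$ and $y\in(0,1)$, $\eta_\xi(y)$ is the unique positive root $\delta$ of $(2+y)\delta^2+2(2+5y-(1+\xi)^2)\delta-4(1-y)(1+\xi)^2=0$, namely $$\eta_\xi(y)=\frac{-2-5y+(1+\xi)^2+\sqrt{(2+5y-(1+\xi)^2)^2+4(2+y)(1-y)(1+\xi)^2}}{2+y}.$$ Let $b(y)=\frac{16}{y+1}-7$, $c_n=\cos(2\pi/n)$, and $\beta(y)=b(y)$ for $y\in[c_{10},1]$, $\beta(y)=\frac{(2-b(c_{10}))b(y)-(2-b(c_9))b(c_{10})}{b(c_9)-b(c_{10})}$ for $y\in[c_9,c_{10}]$. *)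

theory Defs
  imports "HOL-Analysis.Analysis"
begin

definition eta :: "real \<Rightarrow> real \<Rightarrow> real" where
  "eta \<xi> y = (-2 - 5*y + (1+\<xi>)^2
     + sqrt ((2 + 5*y - (1+\<xi>)^2)^2 + 4*(2+y)*(1-y)*(1+\<xi>)^2)) / (2 + y)"

definition bfun :: "real \<Rightarrow> real" where
  "bfun y = 16 / (y + 1) - 7"

definition cn :: "nat \<Rightarrow> real" where
  "cn n = cos (2 * pi / real n)"

definition beta :: "real \<Rightarrow> real" where
  "beta y = (if cn 10 \<le> y then bfun y
     else ((2 - bfun (cn 10)) * bfun y - (2 - bfun (cn 9)) * bfun (cn 10))
          / (bfun (cn 9) - bfun (cn 10)))"

end

theory Submission
  imports Defs
begin

lemma quad_sign:
  fixes A B C e d :: real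
  assumes A: "A > 0" and C: "C > 0" and e: "e = (-B + sqrt (B^2 + A*C)) / A" and d: "d > 0"
  shows "0 < e" "(A*d^2 + 2*B*d - C > 0) = (d > e)" "(A*d^2 + 2*B*d - C < 0) = (d < e)"
proof -
  define q where "q = sqrt (B^2 + A*C)"
  have nn: "0 \<le> B^2 + A*C" using A C by (intro add_nonneg_nonneg) auto
  have q2: "q^2 = B^2 + A*C" unfolding q_def using nn by simp
  have q0: "q \<ge> 0" unfolding q_def using nn by simp
  have qB: "q > \<bar>B\<bar>"
  proof -
    have "\<bar>B\<bar>^2 < q^2" using q2 A C by simp
    thus ?thesis using q0 by (meson abs_ge_zero power_less_imp_less_base)
  qed
  define r where "r = (-B - q)/A"
  have r: "r < 0" unfolding r_def using qB A by (auto simp: divide_neg_pos abs_if split: if_splits)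
  have eq: "e = (-B + q)/A" using e q_def by simp
  show e0: "0 < e" unfolding eq using qB A by (auto simp: abs_if split: if_splits)
  have fac: "A*d^2 + 2*B*d - C = A*(d - e)*(d - r)"
    unfolding eq r_def using A q2
    by (simp add: field_simps power2_eq_square)
  have dr: "d - r > 0" using d r by simp
  show "(A*d^2 + 2*B*d - C > 0) = (d > e)" unfolding fac using A dr
    by (simp add: zero_less_mult_iff)
  show "(A*d^2 + 2*B*d - C < 0) = (d < e)" unfolding fac using A dr
    by (simp add: mult_less_0_iff)
qed

definition FF :: "real \<Rightarrow> real \<Rightarrow> real \<Rightarrow> real" where
  "FF \<xi> y d = (2+y)*d^2 + 2*(2+5*y-(1+\<xi>)^2)*d - 4*(1-y)*(1+\<xi>)^2"

lemma eta_alt: "eta \<xi> y = (-(2+5*y-(1+\<xi>)^2) + sqrt ((2+5*y-(1+\<xi>)^2)^2 + (2+y)*(4*(1-y)*(1+\<xi>)^2))) / (2+y)"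
  unfolding eta_def by (simp add: algebra_simps)

lemma eta_props:
  assumes "\<xi> \<ge> 0" "y < 1" "y > -2" "d > 0"
  shows "eta \<xi> y > 0" "(FF \<xi> y d > 0) = (d > eta \<xi> y)" "(FF \<xi> y d < 0) = (d < eta \<xi> y)"
proof -
  have A: "2 + y > 0" using assms by simp
  have C: "4*(1-y)*(1+\<xi>)^2 > 0" using assms by simp
  note Q = quad_sign[OF A C eta_alt assms(4)]
  show "eta \<xi> y > 0" using Q(1) .
  show "(FF \<xi> y d > 0) = (d > eta \<xi> y)" using Q(2) unfolding FF_def by simp
  show "(FF \<xi> y d < 0) = (d < eta \<xi> y)" using Q(3) unfolding FF_def by simp
qed

lemma eta_root:
  assumes "\<xi> \<ge> 0" "y < 1" "y > -2"
  shows "FF \<xi> y (eta \<xi> y) = 0"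
proof -
  have p: "eta \<xi> y > 0" using eta_props(1)[OF assms zero_less_one] .
  show ?thesis using eta_props(2,3)[OF assms p] by linarith
qed

lemma eta_anti_y:
  assumes "\<xi> \<ge> 0" "-2 < y1" "y1 < y2" "y2 < 1"
  shows "eta \<xi> y2 < eta \<xi> y1"
proof -
  define d where "d = eta \<xi> y1"
  have d: "d > 0" unfolding d_def using eta_props(1)[of \<xi> y1 1] assms by simp
  have r: "FF \<xi> y1 d = 0" unfolding d_def using eta_root[of \<xi> y1] assms by simp
  have "FF \<xi> y2 d - FF \<xi> y1 d = (y2 - y1)*(d^2 + 10*d + 4*(1+\<xi>)^2)"
    unfolding FF_def by (simp add: algebra_simps)
  moreover have "(y2 - y1)*(d^2 + 10*d + 4*(1+\<xi>)^2) > 0" using assms d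
    by (intro mult_pos_pos) (auto intro!: add_pos_nonneg)
  ultimately have "FF \<xi> y2 d > 0" using r by simp
  thus ?thesis using eta_props(2)[of \<xi> y2 d] assms d unfolding d_def by simp
qed

lemma eta_mono_xi:
  assumes "0 \<le> x1" "x1 < x2" "-2 < y" "y < 1"
  shows "eta x1 y < eta x2 y"
proof -
  define d where "d = eta x1 y"
  have d: "d > 0" unfolding d_def using eta_props(1)[of x1 y 1] assms by simp
  have r: "FF x1 y d = 0" unfolding d_def using eta_root[of x1 y] assms by simp
  have "FF x2 y d - FF x1 y d = - ((1+x2)^2 - (1+x1)^2)*(2*d + 4*(1-y))"
    unfolding FF_def by (simp add: algebra_simps)
  moreover have s1: "(1+x1)^2 < (1+x2)^2" using assms by (intro power_strict_mono) auto
  moreover have s2: "2*d + 4*(1-y) > 0" using assms d by simp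
  moreover have "((1+x2)^2 - (1+x1)^2)*(2*d + 4*(1-y)) > 0"
    using s1 s2 by (intro mult_pos_pos) simp_all
  ultimately have "FF x2 y d < 0" using r by linarith
  thus ?thesis using eta_props(3)[of x2 y d] assms d unfolding d_def by simp
qed



lemma c9_gt: "cn 9 > 0.765"
proof -
  define c where "c = cos (2*pi/9)"
  have a9: "2*pi/real (9::nat) = 2*pi/9" by simp
  have cc: "cn 9 = c" unfolding cn_def c_def a9 ..
  have ang: "3*(2*pi/9) = 2*pi/3" by (simp add: field_simps)
  have "cos (3*(2*pi/9)) = -1/2" unfolding ang by (rule cos_120)
  hence eq: "4*c^3 - 3*c = -1/2" unfolding c_def cos_treble_cos .
  have "cos (pi/3) < cos (2*pi/9)" by (rule cos_monotone_0_pi) auto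
  hence c2: "c > 1/2" unfolding c_def cos_60 .
  show ?thesis
  proof (rule ccontr)
    assume "\<not> ?thesis"
    hence c3: "c \<le> 153/200" using cc by simp
    have gen: "(8*a^3 - 6*a + 1) - (8*c^3 - 6*c + 1) = (a - c)*(8*(a^2 + a*c + c^2) - 6)" for a :: real
      by (simp add: algebra_simps power2_eq_square power3_eq_cube)
    have G: "(8*(153/200)^3 - 6*(153/200) + 1) - (8*c^3 - 6*c + 1)
        = ((153/200) - c)*(8*((153/200)^2 + (153/200)*c + c^2) - 6)"
      by (rule gen)
    have cs: "c*c \<ge> (1/2)*(1/2)" using c2 by (intro mult_mono) auto
    have Y: "8*((153/200)^2 + (153/200)*c + c^2) - 6 \<ge> (0::real)"
      using c2 cs by (simp add: power2_eq_square)
    have X: "(153/200) - c \<ge> (0::real)" using c3 by simp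
    have H: "(8*(153/200)^3 - 6*(153/200) + 1) - (8*c^3 - 6*c + 1) \<ge> (0::real)"
      unfolding G using X Y by (rule mult_nonneg_nonneg)
    have N: "8*(153/200)^3 - 6*(153/200) + 1 < (0::real)" by (simp add: power_divide)
    have E: "8*c^3 - 6*c + 1 = 0" using eq by linarith
    show False using H N E by linarith
  qed
qed

lemma c10_gt: "cn 10 > 0.8"
proof -
  define c where "c = cos (pi/5)"
  have a10: "2*pi/real (10::nat) = pi/5" by simp
  have cc: "cn 10 = c" unfolding cn_def c_def a10 ..
  have ang: "3*(pi/5) = pi - 2*(pi/5)" by (simp add: field_simps)
  have "cos (3*(pi/5)) = cos (pi - 2*(pi/5))" by (simp only: ang)
  also have "\<dots> = - cos (2*(pi/5))" by (rule cos_pi_minus)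
  finally have e0: "4*c^3 - 3*c = -(2*c^2 - 1)" unfolding c_def cos_treble_cos cos_double_cos .
  have fac: "(c+1)*(4*c^2 - 2*c - 1) = (4*c^3 - 3*c) + (2*c^2 - 1)"
    by (simp add: algebra_simps power2_eq_square power3_eq_cube)
  have eq: "(c+1)*(4*c^2 - 2*c - 1) = 0" using fac e0 by linarith
  have "cos (pi/3) < cos (pi/5)" by (rule cos_monotone_0_pi) auto
  hence c2: "c > 1/2" unfolding c_def using cos_60 by simp
  have c1: "c + 1 \<noteq> 0" using c2 by simp
  have eq2: "4*c^2 - 2*c - 1 = 0" using eq c1 by simp
  show ?thesis
  proof (rule ccontr)
    assume "\<not> ?thesis"
    hence c3: "c \<le> 4/5" using cc by simp
    have f2: "4*c^2 - 2*c - 1 = (c - 4/5)*(4*c + 6/5) - 1/25"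
      by (simp add: algebra_simps power2_eq_square)
    have "(c - 4/5)*(4*c + 6/5) \<le> 0" using c2 c3
      by (intro mult_nonpos_nonneg) auto
    thus False using eq2 f2 by linarith
  qed
qed

lemma cn_range:
  assumes "n \<ge> 9"
  shows "cn 9 \<le> cn n" "cn n < 1" "cn n > 0.765"
proof -
  have n: "real n \<ge> 9" using assms by simp
  have p: "2*pi/real n > 0" using n by simp
  have le: "2*pi/real n \<le> 2*pi/9" using n by (intro divide_left_mono) auto
  have lp: "2*pi/9 \<le> pi" by simp
  show "cn 9 \<le> cn n" unfolding cn_def
    by (rule cos_monotone_0_pi_le) (use p le in auto)
  show "cn n < 1" unfolding cn_def
    using cos_monotone_0_pi[of 0 "2*pi/real n"] p le lp by simp
  thus "cn n > 0.765" using c9_gt \<open>cn 9 \<le> cn n\<close> by simp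
qed

lemma c9_lt_c10: "cn 9 < cn 10"
  unfolding cn_def by (rule cos_monotone_0_pi) auto

lemma bfun_anti: "-1 < x \<Longrightarrow> x < y \<Longrightarrow> bfun y < bfun x"
  unfolding bfun_def by (simp add: frac_less2)

lemma beta_anti:
  assumes "cn 9 \<le> x" "x < y"
  shows "beta y < beta x"
proof -
  have c9: "cn 9 > 0.765" by (rule c9_gt)
  have c10: "cn 10 > 0.8" by (rule c10_gt)
  have c910: "cn 9 < cn 10" by (rule c9_lt_c10)
  have bx: "-1 < x" using assms c9 by simp
  have b910: "bfun (cn 10) < bfun (cn 9)" using bfun_anti c9 c910 by simp
  have b10: "bfun (cn 10) < 2"
  proof -
    have "cn 10 + 1 > 16/9" using c10 by simp
    hence "16/(cn 10 + 1) < 9" using c10 by (simp add: divide_less_eq)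
    thus ?thesis unfolding bfun_def by simp
  qed
  define K where "K = 2 - bfun (cn 10)"
  define D where "D = bfun (cn 9) - bfun (cn 10)"
  have K: "K > 0" unfolding K_def using b10 by simp
  have D: "D > 0" unfolding D_def using b910 by simp
  have lowpiece: "beta z = (K * bfun z - (2 - bfun (cn 9)) * bfun (cn 10)) / D" if "z < cn 10" for z
    using that unfolding beta_def K_def D_def by simp
  have gt10: "beta z > bfun (cn 10)" if "z < cn 10" "-1 < z" for z
  proof -
    have "bfun z > bfun (cn 10)" using bfun_anti that by simp
    hence "K * bfun z > K * bfun (cn 10)" using K by simp
    hence "K * bfun z - (2 - bfun (cn 9)) * bfun (cn 10) > bfun (cn 10) * D"
      unfolding K_def D_def by (simp add: algebra_simps)
    thus ?thesis using lowpiece[OF that(1)] D by (simp add: less_divide_eq)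
  qed
  show ?thesis
  proof (cases "cn 10 \<le> x")
    case True
    thus ?thesis using assms bfun_anti bx unfolding beta_def by simp
  next
    case False
    show ?thesis
    proof (cases "y < cn 10")
      case True
      have "bfun y < bfun x" using bfun_anti bx assms by simp
      hence "K * bfun y < K * bfun x" using K by simp
      thus ?thesis using lowpiece[OF True] lowpiece False D
        by (simp add: divide_strict_right_mono)
    next
      case False2: False
      have "beta y = bfun y" using False2 unfolding beta_def by simp
      also have "\<dots> \<le> bfun (cn 10)" using bfun_anti[of "cn 10" y] False2 c10
        by (cases "y = cn 10") auto
      also have "\<dots> < beta x" using gt10 False bx by simp
      finally show ?thesis .
    qed
  qed
qed

lemma beta_c9: "beta (cn 9) = 2"
proof -
  have c9: "cn 9 > 0.765" by (rule c9_gt)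
  have c910: "cn 9 < cn 10" by (rule c9_lt_c10)
  have m1: "-1 < cn 9" using c9 by simp
  have b910: "bfun (cn 10) < bfun (cn 9)" by (rule bfun_anti[OF m1 c910])
  have ne: "\<not> cn 10 \<le> cn 9" using c910 by simp
  have gen: "((2 - b) * a - (2 - a) * b) / (a - b) = 2" if "a \<noteq> b" for a b :: real
  proof -
    have e1: "(2 - b) * a - (2 - a) * b = 2 * (a - b)" by (simp add: algebra_simps)
    have e2: "a - b \<noteq> 0" using that by simp
    show ?thesis unfolding e1 using e2 by (rule nonzero_mult_div_cancel_right)
  qed
  have "beta (cn 9) = ((2 - bfun (cn 10)) * bfun (cn 9) - (2 - bfun (cn 9)) * bfun (cn 10))
          / (bfun (cn 9) - bfun (cn 10))" unfolding beta_def using ne by (simp only: if_False)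
  also have "\<dots> = 2" using b910 by (intro gen) simp
  finally show ?thesis .
qed

lemma beta_ge1:
  assumes "cn 9 \<le> x" "x < 1"
  shows "beta x \<ge> 1"
proof -
  have c9: "cn 9 > 0.765" by (rule c9_gt)
  have "beta 1 < beta x" by (rule beta_anti[OF assms])
  moreover have "beta 1 = 1"
  proof -
    have h: "cn 10 \<le> 1" unfolding cn_def by (rule cos_le_one)
    have "beta 1 = bfun 1" unfolding beta_def by (simp only: h if_True)
    thus ?thesis unfolding bfun_def by simp
  qed
  ultimately show ?thesis by simp
qed

theorem lemma4p1:
  shows "(\<forall>\<xi>\<in>{0..0.13::real}.
            strict_antimono_on {cn 9..<1} (eta \<xi>)
          \<and> strict_antimono_on {cn 9..<1} beta
          \<and> (\<forall>n::nat. n \<ge> 9 \<longrightarrow>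
               eta \<xi> (cn n) \<in> {0..0.13} \<and> beta (cn n) \<in> {1..2}))
       \<and> (\<forall>y::real. 0 < y \<and> y < 1 \<longrightarrow> strict_mono_on {0..} (\<lambda>\<xi>. eta \<xi> y))"
proof (intro conjI ballI allI impI)
  have c9: "cn 9 > 0.765" by (rule c9_gt)
  fix \<xi> :: real
  assume xi: "\<xi> \<in> {0..0.13}"
  show "strict_antimono_on {cn 9..<1} (eta \<xi>)"
  proof (rule monotone_onI)
    fix a b :: real
    assume "a \<in> {cn 9..<1}" "b \<in> {cn 9..<1}" "a < b"
    hence a0: "-2 < a" and ab: "a < b" and b1: "b < 1" using c9 by auto
    have x0: "0 \<le> \<xi>" using xi by simp
    show "eta \<xi> b < eta \<xi> a" by (rule eta_anti_y[OF x0 a0 ab b1])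
  qed
  show "strict_antimono_on {cn 9..<1} beta"
  proof (rule monotone_onI)
    fix a b :: real
    assume "a \<in> {cn 9..<1}" "b \<in> {cn 9..<1}" "a < b"
    hence a0: "cn 9 \<le> a" and ab: "a < b" by auto
    show "beta b < beta a" by (rule beta_anti[OF a0 ab])
  qed
  fix n :: nat
  assume n: "n \<ge> 9"
  note r = cn_range[OF n]
  have x0': "0 \<le> \<xi>" using xi by simp
  have m2': "-2 < cn n" using r(3) by simp
  have E1: "eta \<xi> (cn n) > 0" by (rule eta_props(1)[OF x0' r(2) m2' zero_less_one])
  have E2: "eta \<xi> (cn n) \<le> 0.13"
  proof -
    have x0: "0 \<le> \<xi>" using xi by simp
    have a1: "-2 < (0.765::real)" by simp
    have "eta \<xi> (cn n) < eta \<xi> 0.765"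
      by (rule eta_anti_y[OF x0 a1 r(3) r(2)])
    also have "\<dots> \<le> eta 0.13 0.765"
    proof (cases "\<xi> = 0.13")
      case True
      show ?thesis unfolding True by (rule order_refl)
    next
      case False
      hence lt: "\<xi> < 0.13" using xi by simp
      have a2: "(0.765::real) < 1" by simp
      show ?thesis using eta_mono_xi[OF x0 lt a1 a2] by (rule less_imp_le)
    qed
    also have "\<dots> < 0.13"
    proof -
      have "FF 0.13 0.765 0.13 > 0" unfolding FF_def by (simp add: power_divide)
      moreover have h1: "(0::real) \<le> 0.13" by simp
      moreover have h3: "-2 < (0.765::real)" by simp
      moreover have h4: "(0::real) < 0.13" by simp
      moreover have h2: "(0.765::real) < 1" by simp
      ultimately show ?thesis using eta_props(2)[OF h1 h2 h3 h4] by blast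
    qed
    finally show ?thesis by (rule less_imp_le)
  qed
  have B2: "beta (cn n) \<le> 2"
  proof (cases "cn n = cn 9")
    case True
    show ?thesis unfolding True beta_c9 by (rule order_refl)
  next
    case False
    hence "cn 9 < cn n" using r(1) by simp
    hence "beta (cn n) < beta (cn 9)" by (rule beta_anti[OF order_refl])
    thus ?thesis unfolding beta_c9 by (rule less_imp_le)
  qed
  have B1: "beta (cn n) \<ge> 1" by (rule beta_ge1[OF r(1) r(2)])
  show "eta \<xi> (cn n) \<in> {0..0.13}" using E1 E2 by (simp only: atLeastAtMost_iff less_imp_le)
  show "beta (cn n) \<in> {1..2}" using B1 B2 by (simp only: atLeastAtMost_iff)
next
  fix y :: real
  assume y: "0 < y \<and> y < 1"
  show "strict_mono_on {0..} (\<lambda>\<xi>. eta \<xi> y)"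
  proof (rule strict_mono_onI)
    fix a b :: real
    assume "a \<in> {0..}" "b \<in> {0..}" "a < b"
    hence a0: "0 \<le> a" and ab: "a < b" by auto
    have m2: "-2 < y" and m1: "y < 1" using y by auto
    show "eta a y < eta b y" by (rule eta_mono_xi[OF a0 ab m2 m1])
  qed
qed

end
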